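(* Let $\theta$ be uniformly distributed on $[0,2\pi]$, let $k\in\{1,2,3\}$, $W=e^{-i\theta\sigma_k}$ and $G=\frac{\partial W}{\partial\theta}$. Let $A,C$ be arbitrary linear operators on $\mathbb{C}^2$ and let $B=D=\sigma_j$ for some $j\in\{0,1,2,3\}$. Then $$\mathbb{E}_\theta\,\text{Tr}[GAW^\dagger B]\,\text{Tr}[GCW^\dagger D]=\Big[\tfrac12-\tfrac{\delta_{j0}+\delta_{jk}}{2}\Big]\text{Tr}[AB]\,\text{Tr}[CD]+\Big[-\tfrac12-\tfrac{\delta_{j0}+\delta_{jk}}{2}\Big]\text{Tr}[AB\sigma_k]\,\text{Tr}[CD\sigma_k].$$
   Context: $\sigma_0=I$, $\sigma_1,\sigma_2,\sigma_3$ are the Pauli matrices $X,Y,Z$; $\delta$ is the Kronecker delta; $\mathbb{E}_\theta g=\frac1{2\pi}\int_0^{2\pi}g\,d\theta$. *)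

theory Defs
  imports "HOL-Analysis.Analysis"
begin

type_synonym cmat2 = "complex^2^2"

definition pauli :: "nat \<Rightarrow> cmat2" where
  "pauli j = (if j = 1 then vector [vector [0, 1], vector [1, 0]]
              else if j = 2 then vector [vector [0, - \<i>], vector [\<i>, 0]]
              else if j = 3 then vector [vector [1, 0], vector [0, -1]]
              else mat 1)"

definition mat_adj :: "cmat2 \<Rightarrow> cmat2" where
  "mat_adj M = (\<chi> i j. cnj (M $ j $ i))"

definition mat_pow :: "cmat2 \<Rightarrow> nat \<Rightarrow> cmat2" where
  "mat_pow M n = ((\<lambda>X. X ** M) ^^ n) (mat 1)"

definition mat_exp :: "cmat2 \<Rightarrow> cmat2" where
  "mat_exp M = (\<chi> a b. (\<Sum>n. (mat_pow M n) $ a $ b / of_nat (fact n)))"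

definition Wk :: "nat \<Rightarrow> real \<Rightarrow> cmat2" where
  "Wk k \<theta> = mat_exp (\<chi> a b. (- \<i> * complex_of_real \<theta>) * pauli k $ a $ b)"

definition Gk :: "nat \<Rightarrow> real \<Rightarrow> cmat2" where
  "Gk k \<theta> = vector_derivative (Wk k) (at \<theta>)"

end

theory Submission
  imports Defs
begin

lemma ftc_real:
  fixes F f :: "real \<Rightarrow> real"
  assumes "\<And>x. (F has_real_derivative f x) (at x)"
  shows "(f has_integral (F (2*pi) - F 0)) {0..2*pi}"
  apply (rule fundamental_theorem_of_calculus)
  using assms by (auto simp: has_real_derivative_iff_has_vector_derivative intro: has_vector_derivative_at_within)

lemma int_c4: "((\<lambda>x. cos x ^ 4) has_integral (3*pi/4)) {0..2*pi}"
proof -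
  have "((\<lambda>x. cos x ^ 4) has_integral ((\<lambda>x. 3*x/8 + 3 * sin x*cos x/8 + sin x * cos x^3/4) (2*pi) - (\<lambda>x. 3*x/8 + 3 * sin x*cos x/8 + sin x * cos x^3/4) 0)) {0..2*pi}"
  proof (rule ftc_real)
    fix x :: real
    have e: "sin x ^2 + cos x ^2 = 1" by simp
    show "((\<lambda>x. 3*x/8 + 3 * sin x*cos x/8 + sin x * cos x^3/4) has_real_derivative cos x ^ 4) (at x)"
      apply (auto intro!: derivative_eq_intros)
      using e by algebra
  qed
  then show ?thesis by simp
qed

lemma int_c2s2: "((\<lambda>x. cos x ^ 2 * sin x ^ 2) has_integral (pi/4)) {0..2*pi}"
proof -
  have "((\<lambda>x. cos x ^ 2 * sin x ^ 2) has_integral ((\<lambda>x. x/8 + sin x*cos x/8 - sin x * cos x^3/4) (2*pi) - (\<lambda>x. x/8 + sin x*cos x/8 - sin x * cos x^3/4) 0)) {0..2*pi}"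
  proof (rule ftc_real)
    fix x :: real
    have e: "sin x ^2 + cos x ^2 = 1" by simp
    show "((\<lambda>x. x/8 + sin x*cos x/8 - sin x * cos x^3/4) has_real_derivative cos x ^ 2 * sin x ^ 2) (at x)"
      apply (auto intro!: derivative_eq_intros)
      using e by algebra
  qed
  then show ?thesis by simp
qed

lemma int_s4: "((\<lambda>x. sin x ^ 4) has_integral (3*pi/4)) {0..2*pi}"
proof -
  have "((\<lambda>x. sin x ^ 4) has_integral ((\<lambda>x. 3*x/8 - 5 * sin x*cos x/8 + sin x * cos x^3/4) (2*pi) - (\<lambda>x. 3*x/8 - 5 * sin x*cos x/8 + sin x * cos x^3/4) 0)) {0..2*pi}"
  proof (rule ftc_real)
    fix x :: real
    have e: "sin x ^2 + cos x ^2 = 1" by simp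
    show "((\<lambda>x. 3*x/8 - 5 * sin x*cos x/8 + sin x * cos x^3/4) has_real_derivative sin x ^ 4) (at x)"
      apply (auto intro!: derivative_eq_intros)
      using e by algebra
  qed
  then show ?thesis by simp
qed

lemma int_c3s: "((\<lambda>x. cos x ^ 3 * sin x) has_integral 0) {0..2*pi}"
proof -
  have "((\<lambda>x. cos x ^ 3 * sin x) has_integral ((\<lambda>x. (- (cos x ^ 4)) / 4) (2*pi) - (\<lambda>x. (- (cos x ^ 4)) / 4) 0)) {0..2*pi}"
  proof (rule ftc_real)
    fix x :: real
    show "((\<lambda>x. (- (cos x ^ 4)) / 4) has_real_derivative cos x ^ 3 * sin x) (at x)"
      by (auto intro!: derivative_eq_intros simp: algebra_simps)
  qed
  then show ?thesis by simp
qed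

lemma int_cs3: "((\<lambda>x. cos x * sin x ^ 3) has_integral 0) {0..2*pi}"
proof -
  have "((\<lambda>x. cos x * sin x ^ 3) has_integral ((\<lambda>x. sin x ^ 4 / 4) (2*pi) - (\<lambda>x. sin x ^ 4 / 4) 0)) {0..2*pi}"
  proof (rule ftc_real)
    fix x :: real
    show "((\<lambda>x. sin x ^ 4 / 4) has_real_derivative cos x * sin x ^ 3) (at x)"
      by (auto intro!: derivative_eq_intros simp: algebra_simps)
  qed
  then show ?thesis by simp
qed

definition smul :: "complex \<Rightarrow> cmat2 \<Rightarrow> cmat2" where
  "smul z M = (\<chi> a b. z * M $ a $ b)"

lemma smul_mult: "smul z X ** smul w Y = smul (z*w) (X ** Y)"
  by (simp add: vec_eq_iff smul_def matrix_matrix_mult_def sum_2 algebra_simps)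

lemma smul_one: "smul 1 X = X"
  by (simp add: vec_eq_iff smul_def)

lemma pauli_sq: "pauli k ** pauli k = mat 1"
  by (simp add: vec_eq_iff forall_2 pauli_def matrix_matrix_mult_def sum_2 mat_def)

lemma mat_pow_Suc: "mat_pow M (Suc n) = mat_pow M n ** M"
  by (simp add: mat_pow_def)

lemma mat_pow_pauli:
  "mat_pow (smul z (pauli k)) n = smul (z^n) (if even n then mat 1 else pauli k)"
proof (induction n)
  case 0
  then show ?case by (simp add: mat_pow_def smul_one)
next
  case (Suc n)
  show ?case
    by (simp add: mat_pow_Suc Suc smul_mult pauli_sq matrix_mul_lid) (simp add: mult.commute)
qed

lemma exp_sums_c: "(\<lambda>n. x^n / of_nat (fact n)) sums exp (x::complex)"
  using exp_converges[of x] by (simp add: scaleR_conv_of_real divide_inverse mult.commute)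

lemma Wk_eq: "Wk k t = cos t *\<^sub>R mat 1 + sin t *\<^sub>R smul (- \<i>) (pauli k)"
proof -
  have arg: "(\<chi> a b. (- \<i> * complex_of_real t) * pauli k $ a $ b) = smul (- \<i> * t) (pauli k)"
    by (simp add: smul_def)
  show ?thesis
  proof (simp add: vec_eq_iff, intro allI)
    fix a b :: 2
    define z where "z = - \<i> * complex_of_real t"
    have W2: "Wk k t = mat_exp (smul z (pauli k))"
      unfolding Wk_def z_def smul_def by simp
    define x where "x = (mat 1 :: cmat2) $ a $ b"
    define y where "y = pauli k $ a $ b"
    define p where "p = (x + y) / 2"
    define q where "q = (x - y) / 2"
    have E: "(if even n then mat 1 else pauli k) $ a $ b = p + (-1)^n * q" for n
      by (cases "even n") (simp_all add: p_def q_def x_def[symmetric] y_def[symmetric] add_divide_distrib[symmetric] diff_divide_distrib[symmetric])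
    have trm: "(z^n * (if even n then mat 1 else pauli k) $ a $ b) / of_nat (fact n)
      = z^n / of_nat (fact n) * p + (-z)^n / of_nat (fact n) * q" for n
      unfolding E power_minus[of z] by (simp add: algebra_simps add_divide_distrib)
    have "(\<lambda>n. z^n / of_nat (fact n) * p + (-z)^n / of_nat (fact n) * q) sums (exp z * p + exp (-z) * q)"
      by (intro sums_add sums_mult2 exp_sums_c)
    then have "(\<lambda>n. (z^n * (if even n then mat 1 else pauli k) $ a $ b) / of_nat (fact n)) sums (exp z * p + exp (-z) * q)"
      by (simp only: trm)
    then have s: "(\<Sum>n. (z^n * (if even n then mat 1 else pauli k) $ a $ b) / of_nat (fact n)) = exp z * p + exp (-z) * q"
      by (rule sums_unique[symmetric])
    have ez: "exp z = cos t - \<i> * sin t" 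
      using cis_conv_exp[of "-t"] by (simp add: z_def cis.ctr complex_eq_iff)
    have emz: "exp (-z) = cos t + \<i> * sin t" 
      using cis_conv_exp[of "t"] by (simp add: z_def cis.ctr complex_eq_iff)
    have "Wk k t $ a $ b = exp z * p + exp (-z) * q"
      unfolding W2 mat_exp_def mat_pow_pauli
      by (simp only: smul_def vec_lambda_beta s)
    also have "\<dots> = cos t * x + sin t * (- \<i> * y)"
      unfolding ez emz p_def q_def by (simp add: algebra_simps add_divide_distrib diff_divide_distrib)
    finally show "Wk k t $ a $ b = cos t *\<^sub>R mat 1 $ a $ b + sin t *\<^sub>R (smul (- \<i>) (pauli k) $ a $ b)"
      by (simp add: scaleR_conv_of_real smul_def x_def y_def)
  qed
qed

lemma Gk_eq: "Gk k t = (- sin t) *\<^sub>R mat 1 + cos t *\<^sub>R smul (- \<i>) (pauli k)"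
proof -
  have "Wk k = (\<lambda>t. cos t *\<^sub>R mat 1 + sin t *\<^sub>R smul (- \<i>) (pauli k))"
    by (rule ext, rule Wk_eq)
  moreover have "((\<lambda>t. cos t *\<^sub>R mat 1 + sin t *\<^sub>R smul (- \<i>) (pauli k)) has_vector_derivative
     ((- sin t) *\<^sub>R mat 1 + cos t *\<^sub>R smul (- \<i>) (pauli k))) (at t)"
    by (auto intro!: derivative_eq_intros)
  ultimately show ?thesis unfolding Gk_def by (simp add: vector_derivative_at)
qed

lemma scaleR_smul: "r *\<^sub>R (M::cmat2) = smul (complex_of_real r) M"
  apply (simp only: vec_eq_iff smul_def vector_scaleR_component vec_lambda_beta)
  apply (simp add: scaleR_conv_of_real)
  done

lemma mm_add_l: "((X::cmat2) + Y) ** Z = X ** Z + Y ** Z"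
  by (simp add: vec_eq_iff matrix_matrix_mult_def sum_2 algebra_simps)
lemma mm_diff_l: "((X::cmat2) - Y) ** Z = X ** Z - Y ** Z"
  by (simp add: vec_eq_iff matrix_matrix_mult_def sum_2 algebra_simps)
lemma mm_diff_r: "(Z::cmat2) ** (X - Y) = Z ** X - Z ** Y"
  by (simp add: vec_eq_iff matrix_matrix_mult_def sum_2 algebra_simps)
lemma smul_mm_l: "smul z X ** Y = smul z (X ** Y)"
  by (simp add: vec_eq_iff matrix_matrix_mult_def sum_2 smul_def algebra_simps)
lemma smul_mm_r: "X ** smul z Y = smul z (X ** Y)"
  by (simp add: vec_eq_iff matrix_matrix_mult_def sum_2 smul_def algebra_simps)
lemma trace_add2: "trace ((X::cmat2) + Y) = trace X + trace Y"
  by (simp add: trace_def sum_2)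
lemma trace_diff2: "trace ((X::cmat2) - Y) = trace X - trace Y"
  by (simp add: trace_def sum_2)
lemma trace_smul: "trace (smul z X) = z * trace X"
  by (simp add: trace_def sum_2 smul_def algebra_simps)
lemma smul_smul: "smul z (smul w X) = smul (z*w) X"
  by (simp add: vec_eq_iff smul_def)

lemma adj_W: "mat_adj (c *\<^sub>R mat 1 + s *\<^sub>R smul (- \<i>) (pauli k)) = c *\<^sub>R mat 1 - s *\<^sub>R smul (- \<i>) (pauli k)"
  unfolding scaleR_smul
  by (simp add: vec_eq_iff forall_2 mat_adj_def smul_def pauli_def mat_def)

lemma key_trace:
  fixes c s :: complex and S A B :: cmat2
  shows "trace ((smul (- s) (mat 1) + smul c S) ** A ** (smul c (mat 1) - smul s S) ** B)
    = c^2 * trace (S ** A ** B) + c * s * (- trace (A ** B) - trace (S ** A ** S ** B))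
      + s^2 * trace (A ** S ** B)"
  by (simp add: mm_add_l mm_diff_l mm_diff_r smul_mm_l smul_mm_r trace_add2 trace_diff2 trace_smul
     smul_smul matrix_mul_assoc algebra_simps power2_eq_square)

lemma alg:
  fixes A C :: cmat2
  assumes "k \<in> {1, 2, 3}" and "j \<in> {0, 1, 2, 3}"
  defines "S \<equiv> smul (- \<i>) (pauli k)" and "B \<equiv> pauli j"
  defines "a \<equiv> trace (S ** A ** B)" and "b \<equiv> - trace (A ** B) - trace (S ** A ** S ** B)"
    and "d \<equiv> trace (A ** S ** B)"
  defines "a' \<equiv> trace (S ** C ** B)" and "b' \<equiv> - trace (C ** B) - trace (S ** C ** S ** B)"
    and "d' \<equiv> trace (C ** S ** B)"
  shows "(3*a*a' + a*d' + d*a' + b*b' + 3*d*d') / 8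
     = (1/2 - (of_bool (j = 0) + of_bool (j = k)) / 2) * trace (A ** B) * trace (C ** B)
           + (- 1/2 - (of_bool (j = 0) + of_bool (j = k)) / 2)
               * trace (A ** B ** pauli k) * trace (C ** B ** pauli k)"
  using assms(1,2) unfolding a_def b_def d_def a'_def b'_def d'_def S_def B_def
  apply (simp add: trace_def sum_2 matrix_matrix_mult_def smul_def)
  apply (elim disjE)
  apply (simp_all add: pauli_def mat_def)
  apply (simp_all add: algebra_simps)
  done


lemma int_main:
  fixes a b d a' b' d' :: complex
  shows "integral {0..2*pi} (\<lambda>t. ((of_real (cos t))^2 * a + of_real (cos t) * of_real (sin t) * b + (of_real (sin t))^2 * d)
     * ((of_real (cos t))^2 * a' + of_real (cos t) * of_real (sin t) * b' + (of_real (sin t))^2 * d'))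
    = of_real pi * (3*a*a' + a*d' + d*a' + b*b' + 3*d*d') / 4"
proof -
  have eq: "((of_real (cos t))^2 * a + of_real (cos t) * of_real (sin t) * b + (of_real (sin t))^2 * d)
     * ((of_real (cos t))^2 * a' + of_real (cos t) * of_real (sin t) * b' + (of_real (sin t))^2 * d')
    = of_real (cos t ^ 4) * (a*a') + of_real (cos t ^ 3 * sin t) * (a*b' + b*a')
      + of_real (cos t ^ 2 * sin t ^ 2) * (a*d' + d*a' + b*b') + of_real (cos t * sin t ^ 3) * (b*d' + d*b')
      + of_real (sin t ^ 4) * (d*d')" for t
    by (simp add: algebra_simps power2_eq_square power3_eq_cube power4_eq_xxxx)
  have "((\<lambda>t. of_real (cos t ^ 4) * (a*a') + of_real (cos t ^ 3 * sin t) * (a*b' + b*a')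
      + of_real (cos t ^ 2 * sin t ^ 2) * (a*d' + d*a' + b*b') + of_real (cos t * sin t ^ 3) * (b*d' + d*b')
      + of_real (sin t ^ 4) * (d*d')) has_integral
      (of_real (3*pi/4) * (a*a') + of_real 0 * (a*b' + b*a') + of_real (pi/4) * (a*d' + d*a' + b*b')
       + of_real 0 * (b*d' + d*b') + of_real (3*pi/4) * (d*d'))) {0..2*pi}"
    by (intro has_integral_add has_integral_mult_left has_integral_of_real int_c4 int_c3s int_c2s2 int_cs3 int_s4)
  then have "integral {0..2*pi} (\<lambda>t. ((of_real (cos t))^2 * a + of_real (cos t) * of_real (sin t) * b + (of_real (sin t))^2 * d)
     * ((of_real (cos t))^2 * a' + of_real (cos t) * of_real (sin t) * b' + (of_real (sin t))^2 * d'))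
     = of_real (3*pi/4) * (a*a') + of_real 0 * (a*b' + b*a') + of_real (pi/4) * (a*d' + d*a' + b*b')
       + of_real 0 * (b*d' + d*b') + of_real (3*pi/4) * (d*d')"
    unfolding eq by (rule integral_unique)
  then show ?thesis by (simp add: field_simps)
qed

theorem lemma4:
  fixes A C :: "complex^2^2" and k j :: nat
  assumes "k \<in> {1, 2, 3}" and "j \<in> {0, 1, 2, 3}"
  defines "B \<equiv> pauli j" and "D \<equiv> pauli j"
  shows "integral {0..2*pi}
           (\<lambda>\<theta>. trace (Gk k \<theta> ** A ** mat_adj (Wk k \<theta>) ** B)
               * trace (Gk k \<theta> ** C ** mat_adj (Wk k \<theta>) ** D)) / (2 * pi)
         = (1/2 - (of_bool (j = 0) + of_bool (j = k)) / 2) * trace (A ** B) * trace (C ** D)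
           + (- 1/2 - (of_bool (j = 0) + of_bool (j = k)) / 2)
               * trace (A ** B ** pauli k) * trace (C ** D ** pauli k)"
proof -
  define S where "S = smul (- \<i>) (pauli k)"
  define a where "a = trace (S ** A ** B)"
  define b where "b = - trace (A ** B) - trace (S ** A ** S ** B)"
  define d where "d = trace (A ** S ** B)"
  define a' where "a' = trace (S ** C ** B)"
  define b' where "b' = - trace (C ** B) - trace (S ** C ** S ** B)"
  define d' where "d' = trace (C ** S ** B)"
  have tr: "trace (Gk k t ** X ** mat_adj (Wk k t) ** B)
     = (of_real (cos t))^2 * trace (S ** X ** B) + of_real (cos t) * of_real (sin t) * (- trace (X ** B) - trace (S ** X ** S ** B))
      + (of_real (sin t))^2 * trace (X ** S ** B)" for t X
  proof -
    have "trace (Gk k t ** X ** mat_adj (Wk k t) ** B)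
       = trace ((smul (- of_real (sin t)) (mat 1) + smul (of_real (cos t)) S) ** X
           ** (smul (of_real (cos t)) (mat 1) - smul (of_real (sin t)) S) ** B)"
      unfolding Gk_eq Wk_eq adj_W S_def by (simp add: scaleR_smul)
    then show ?thesis by (simp only: key_trace)
  qed
  have "integral {0..2*pi}
           (\<lambda>\<theta>. trace (Gk k \<theta> ** A ** mat_adj (Wk k \<theta>) ** B)
               * trace (Gk k \<theta> ** C ** mat_adj (Wk k \<theta>) ** D))
      = of_real pi * (3*a*a' + a*d' + d*a' + b*b' + 3*d*d') / 4"
    unfolding D_def B_def[symmetric] tr a_def b_def d_def a'_def b'_def d'_def by (rule int_main)
  then have "integral {0..2*pi}
           (\<lambda>\<theta>. trace (Gk k \<theta> ** A ** mat_adj (Wk k \<theta>) ** B)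
               * trace (Gk k \<theta> ** C ** mat_adj (Wk k \<theta>) ** D)) / (2 * pi)
      = (3*a*a' + a*d' + d*a' + b*b' + 3*d*d') / 8"
    by (simp add: field_simps)
  also have "\<dots> = (1/2 - (of_bool (j = 0) + of_bool (j = k)) / 2) * trace (A ** B) * trace (C ** B)
           + (- 1/2 - (of_bool (j = 0) + of_bool (j = k)) / 2)
               * trace (A ** B ** pauli k) * trace (C ** B ** pauli k)"
    unfolding a_def b_def d_def a'_def b'_def d'_def S_def B_def using assms(1,2) by (rule alg)
  finally show ?thesis unfolding D_def B_def .
qed

end
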